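(* Let $V$ be a Euclidean vector space of dimension $m+1$ with $m\geq 1$, and let $S(V)=\{v\in V : \|v\|=1\}$ be its unit sphere. Suppose that $f_1,\ldots,f_m : S(V)\to\mathbb{R}$ are continuous functions such that $f_i(-v)=-f_i(v)$ for all $v\in S(V)$ and all $i=1,\ldots,m$. Suppose further that the open subset $$\Omega=\{v\in S(V) : |f_i(v)|<1 \text{ for all } i=1,\ldots,m\}$$ of $S(V)$ can be written as a disjoint union $\Omega=\Omega_+\sqcup\Omega_-$ of two open subsets of $S(V)$ satisfying $\Omega_-=-\Omega_+=\{-v : v\in\Omega_+\}$. Then the image of the continuous map $(f_1,\ldots,f_m): S(V)\to\mathbb{R}^m$ contains the cube $[-1,1]^m$; that is, for every $(t_1,\ldots,t_m)\in[-1,1]^m$ there exists $v\in S(V)$ with $f_i(v)=t_i$ for all $i=1,\ldots,m$. *)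

theory Defs
  imports "HOL-Analysis.Analysis"
begin

end

theory Submission
  imports Defs "HOL-Homology.Invariance_of_Domain"
begin

locale benum =
  fixes b :: "nat \<Rightarrow> 'a::euclidean_space"
  assumes bij: "bij_betw b {..<DIM('a)} Basis"
begin

definition E :: "(nat \<Rightarrow> real) \<Rightarrow> 'a" where
  "E x = (\<Sum>i<DIM('a). x i *\<^sub>R b i)"

definition G :: "'a \<Rightarrow> nat \<Rightarrow> real" where
  "G y = (\<lambda>i. if i < DIM('a) then y \<bullet> b i else 0)"

definition T :: "nat \<Rightarrow> 'a set" where
  "T k = {y. \<forall>i. k < i \<and> i < DIM('a) \<longrightarrow> y \<bullet> b i = 0}"

definition S :: "nat \<Rightarrow> 'a set" where
  "S k = sphere 0 1 \<inter> T k"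

lemma b_Basis: "i < DIM('a) \<Longrightarrow> b i \<in> Basis"
  using bij by (auto simp: bij_betw_def)

lemma b_inj: "inj_on b {..<DIM('a)}"
  using bij by (auto simp: bij_betw_def)

lemma b_inner: "i < DIM('a) \<Longrightarrow> j < DIM('a) \<Longrightarrow> b i \<bullet> b j = (if i = j then 1 else 0)"
  using b_Basis b_inj by (auto simp: inner_Basis inj_on_def)

lemma E_inner: "j < DIM('a) \<Longrightarrow> E x \<bullet> b j = x j"
proof -
  assume j: "j < DIM('a)"
  have "E x \<bullet> b j = (\<Sum>i<DIM('a). x i * (b i \<bullet> b j))"
    by (simp add: E_def inner_sum_left)
  also have "\<dots> = (\<Sum>i<DIM('a). if i = j then x j else 0)"
    by (rule sum.cong) (auto simp: b_inner j)
  also have "\<dots> = x j" using j by simp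
  finally show ?thesis .
qed

lemma sum_b: "(\<Sum>i<DIM('a). f (b i)) = (\<Sum>u\<in>Basis. f u)"
  using sum.reindex[OF b_inj, of f] bij by (simp add: bij_betw_def)

lemma EG: "E (G y) = y"
proof -
  have "E (G y) = (\<Sum>i<DIM('a). (y \<bullet> b i) *\<^sub>R b i)"
    by (simp add: E_def G_def)
  also have "\<dots> = (\<Sum>u\<in>Basis. (y \<bullet> u) *\<^sub>R u)"
    by (rule sum_b)
  finally show ?thesis by (simp add: euclidean_representation)
qed

lemma GE: "(\<And>i. i \<ge> DIM('a) \<Longrightarrow> x i = 0) \<Longrightarrow> G (E x) = x"
  by (rule ext) (auto simp: G_def E_inner)

lemma E_minus: "E (\<lambda>i. - x i) = - E x"
  by (simp add: E_def sum_negf)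

lemma G_minus: "G (- y) = (\<lambda>i. - G y i)"
  by (auto simp: G_def)

lemma norm_sq: "(norm y)\<^sup>2 = (\<Sum>i<DIM('a). (y \<bullet> b i)\<^sup>2)"
proof -
  have "(norm y)\<^sup>2 = y \<bullet> y" by (rule power2_norm_eq_inner)
  also have "\<dots> = (\<Sum>u\<in>Basis. (y \<bullet> u) * (y \<bullet> u))" by (rule euclidean_inner)
  also have "\<dots> = (\<Sum>u\<in>Basis. (y \<bullet> u)\<^sup>2)" by (simp add: power2_eq_square)
  also have "\<dots> = (\<Sum>i<DIM('a). (y \<bullet> b i)\<^sup>2)"
    by (rule sum_b[symmetric])
  finally show ?thesis .
qed

lemma subspace_T: "subspace (T k)"
  by (auto simp: subspace_def T_def inner_add_left)

lemma T_span: "T k = span (b ` {..k})" if "k < DIM('a)"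
proof
  show "span (b ` {..k}) \<subseteq> T k"
  proof (rule span_minimal[OF _ subspace_T])
    show "b ` {..k} \<subseteq> T k"
      using that by (auto simp: T_def b_inner)
  qed
  show "T k \<subseteq> span (b ` {..k})"
  proof
    fix y assume y: "y \<in> T k"
    have "y = E (G y)" by (simp add: EG)
    also have "\<dots> = (\<Sum>i<DIM('a). (y \<bullet> b i) *\<^sub>R b i)"
      by (simp add: E_def G_def)
    also have "\<dots> = (\<Sum>i\<in>{..k}. (y \<bullet> b i) *\<^sub>R b i)"
      using y that by (intro sum.mono_neutral_right) (auto simp: T_def)
    also have "\<dots> \<in> span (b ` {..k})"
      by (intro span_sum span_scale span_base) auto
    finally show "y \<in> span (b ` {..k})" .
  qed
qed

lemma dim_T: "dim (T k) = Suc k" if "k < DIM('a)"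
proof -
  have ind: "independent (b ` {..k})"
    using that b_Basis by (intro independent_mono[OF independent_Basis]) auto
  have "card (b ` {..k}) = Suc k"
    using that by (subst card_image) (auto intro: inj_on_subset[OF b_inj])
  then show ?thesis
    using T_span[OF that] dim_span_eq_card_independent[OF ind] by simp
qed

lemma T_mono: "k \<le> l \<Longrightarrow> T k \<subseteq> T l"
  by (auto simp: T_def)

lemma topspace_nsphere_iff: "x \<in> topspace (nsphere k) \<longleftrightarrow> (\<Sum>i\<le>k. (x i)\<^sup>2) = 1 \<and> (\<forall>i>k. x i = 0)"
  by (simp add: nsphere)

lemma E_in_S: "x \<in> topspace (nsphere k) \<Longrightarrow> k < DIM('a) \<Longrightarrow> E x \<in> S k"
proof -
  assume x: "x \<in> topspace (nsphere k)" and k: "k < DIM('a)"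
  have x0: "\<And>i. i > k \<Longrightarrow> x i = 0" and x1: "(\<Sum>i\<le>k. (x i)\<^sup>2) = 1"
    using x by (auto simp: topspace_nsphere_iff)
  have "(norm (E x))\<^sup>2 = (\<Sum>i<DIM('a). (x i)\<^sup>2)"
    by (simp add: norm_sq E_inner)
  also have "\<dots> = (\<Sum>i\<le>k. (x i)\<^sup>2)"
    using k x0 by (intro sum.mono_neutral_right) auto
  finally have "norm (E x) = 1" using x1 norm_ge_zero[of "E x"] by (simp add: power2_eq_1_iff)
  moreover have "E x \<in> T k" using x0 by (auto simp: T_def E_inner)
  ultimately show ?thesis by (simp add: S_def)
qed

lemma G_in_nsphere: "y \<in> S k \<Longrightarrow> k < DIM('a) \<Longrightarrow> G y \<in> topspace (nsphere k)"
proof -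
  assume y: "y \<in> S k" and k: "k < DIM('a)"
  have "1 = (norm y)\<^sup>2" using y by (simp add: S_def)
  also have "\<dots> = (\<Sum>i<DIM('a). (y \<bullet> b i)\<^sup>2)" by (rule norm_sq)
  also have "\<dots> = (\<Sum>i\<le>k. (y \<bullet> b i)\<^sup>2)"
    using k y by (intro sum.mono_neutral_right) (auto simp: S_def T_def)
  also have "\<dots> = (\<Sum>i\<le>k. (G y i)\<^sup>2)"
    using k by (intro sum.cong) (auto simp: G_def)
  finally have s1: "(\<Sum>i\<le>k. (G y i)\<^sup>2) = 1" by simp
  moreover have "\<forall>i>k. G y i = 0" using y by (auto simp: G_def S_def T_def)
  ultimately show ?thesis by (simp add: topspace_nsphere_iff)
qed

lemma cont_E: "continuous_map (nsphere k) (top_of_set (S k)) E" if "k < DIM('a)"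
proof -
  have "continuous_on UNIV E"
    unfolding E_def by (intro continuous_on_sum continuous_on_scaleR continuous_on_product_coordinates continuous_on_const)
  then have "continuous_map euclidean euclidean E"
    by (simp add: continuous_map_iff_continuous2)
  then have "continuous_map (nsphere k) euclidean E"
    unfolding nsphere euclidean_product_topology[symmetric]
    by (rule continuous_map_from_subtopology)
  then show ?thesis
    using E_in_S[OF _ that] by (auto simp: continuous_map_in_subtopology)
qed

lemma cont_G: "continuous_map (top_of_set (S k)) (nsphere k) G" if "k < DIM('a)"
proof -
  have "continuous_map (top_of_set (S k)) (powertop_real UNIV) G"
    unfolding continuous_map_componentwise_UNIV G_def
    by (auto intro!: continuous_intros continuous_map_from_subtopology)
  then show ?thesis
    using G_in_nsphere[OF _ that] unfolding nsphere
    by (auto simp: continuous_map_in_subtopology topspace_nsphere_iff)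
qed



lemma T_expand: "k < DIM('a) \<Longrightarrow> y \<in> T k \<Longrightarrow> y = (\<Sum>i\<le>k. (y \<bullet> b i) *\<^sub>R b i)"
proof -
  assume k: "k < DIM('a)" and y: "y \<in> T k"
  have "y = E (G y)" by (simp add: EG)
  also have "\<dots> = (\<Sum>i<DIM('a). (y \<bullet> b i) *\<^sub>R b i)"
    by (simp add: E_def G_def)
  also have "\<dots> = (\<Sum>i\<in>{..k}. (y \<bullet> b i) *\<^sub>R b i)"
    using y k by (intro sum.mono_neutral_right) (auto simp: T_def)
  finally show ?thesis .
qed

lemma cont_tr:
  assumes "k < DIM('a)" "continuous_on (S k) \<phi>" "\<phi> ` S k \<subseteq> S k"
  shows "continuous_map (nsphere k) (nsphere k) (G \<circ> \<phi> \<circ> E)"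
proof -
  have "continuous_map (top_of_set (S k)) (top_of_set (S k)) \<phi>"
    using assms by (auto simp: continuous_map_in_subtopology image_subset_iff)
  then show ?thesis
    using continuous_map_compose[OF continuous_map_compose[OF cont_E[OF assms(1)]] cont_G[OF assms(1)]]
    by (simp add: o_assoc)
qed

lemma odd_tr:
  assumes "k < DIM('a)" "\<And>x. x \<in> S k \<Longrightarrow> \<phi> (-x) = - \<phi> x" "u \<in> topspace (nsphere k)"
  shows "((G \<circ> \<phi> \<circ> E) \<circ> (\<lambda>x i. - x i)) u = ((\<lambda>x i. - x i) \<circ> (G \<circ> \<phi> \<circ> E)) u"
  using assms E_in_S[OF assms(3,1)] by (simp add: E_minus G_minus)

lemma homot_tr:
  assumes "k < DIM('a)" "homotopic_with_canon (\<lambda>x. True) (S k) (S k) \<phi> \<psi>"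
  shows "homotopic_with (\<lambda>x. True) (nsphere k) (nsphere k) (G \<circ> \<phi> \<circ> E) (G \<circ> \<psi> \<circ> E)"
proof -
  have "homotopic_with (\<lambda>x. True) (top_of_set (S k)) (nsphere k) (G \<circ> \<phi>) (G \<circ> \<psi>)"
    by (rule homotopic_with_compose_continuous_map_left[OF assms(2) cont_G[OF assms(1)]]) auto
  then show ?thesis
    by (rule homotopic_with_compose_continuous_map_right[OF _ cont_E[OF assms(1)]]) auto
qed

lemma tr_comp: "(G \<circ> \<psi> \<circ> E) \<circ> (G \<circ> \<phi> \<circ> E) = G \<circ> (\<psi> \<circ> \<phi>) \<circ> E"
  by (simp add: fun_eq_iff EG)

lemma S_sub: "S k \<subseteq> S (Suc k)"
  using T_mono[of k "Suc k"] by (auto simp: S_def)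

lemma S_neg: "x \<in> S k \<Longrightarrow> -x \<in> S k"
  by (auto simp: S_def T_def)

lemma b_in_S: "i < DIM('a) \<Longrightarrow> i \<le> k \<Longrightarrow> b i \<in> S k"
  by (auto simp: S_def T_def b_inner b_Basis)

lemma S_Suc: "x \<in> S (Suc k) \<Longrightarrow> x \<bullet> b (Suc k) = 0 \<Longrightarrow> x \<in> S k"
  unfolding S_def T_def
proof clarsimp
  fix i assume "x \<bullet> b (Suc k) = 0" "\<forall>i. Suc k < i \<and> i < DIM('a) \<longrightarrow> x \<bullet> b i = 0" "k < i" "i < DIM('a)"
  then show "x \<bullet> b i = 0" by (cases "i = Suc k") auto
qed

lemma base:
  assumes N: "0 < DIM('a)" and cont: "continuous_on (S 0) \<phi>" and im: "\<phi> ` S 0 \<subseteq> S 0"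
    and od: "\<And>x. x \<in> S 0 \<Longrightarrow> \<phi> (-x) = - \<phi> x"
  shows "odd (Brouwer_degree2 0 (G \<circ> \<phi> \<circ> E))"
proof -
  have S0: "y = (y \<bullet> b 0) *\<^sub>R b 0" if "y \<in> S 0" for y
    using T_expand[OF N, of y] that by (simp add: S_def)
  have b0: "b 0 \<in> S 0" using b_in_S[OF N] by simp
  define c where "c = \<phi> (b 0) \<bullet> b 0"
  have pb: "\<phi> (b 0) = c *\<^sub>R b 0" using S0[of "\<phi> (b 0)"] im b0 by (auto simp: c_def)
  have "\<phi> (b 0) \<in> S 0" using im b0 by auto
  then have "norm (\<phi> (b 0)) = 1" by (simp add: S_def)
  then have c1: "c = 1 \<or> c = -1" using pb b_Basis[OF N] by (auto simp: abs_if split: if_splits)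
  have key: "(G \<circ> \<phi> \<circ> E) u = (\<lambda>i. c * u i)" if u: "u \<in> topspace (nsphere 0)" for u
  proof -
    have u0: "\<And>i. i > 0 \<Longrightarrow> u i = 0" and u1: "(u 0)\<^sup>2 = 1"
      using u by (auto simp: topspace_nsphere_iff)
    have "E u = (\<Sum>i<DIM('a). u i *\<^sub>R b i)" by (simp add: E_def)
    also have "\<dots> = (\<Sum>i\<in>{0}. u i *\<^sub>R b i)"
      using N u0 by (intro sum.mono_neutral_right) auto
    finally have Eu: "E u = u 0 *\<^sub>R b 0" by simp
    have "u 0 = 1 \<or> u 0 = -1" using u1 by (simp add: power2_eq_1_iff)
    then have "\<phi> (E u) = (u 0 * c) *\<^sub>R b 0"
      using od[OF b0] pb Eu by auto
    then show ?thesis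
      using N u0 by (auto simp: G_def b_inner fun_eq_iff)
  qed
  from c1 show ?thesis
  proof
    assume "c = 1"
    then have "Brouwer_degree2 0 (G \<circ> \<phi> \<circ> E) = Brouwer_degree2 0 id"
      using key by (intro Brouwer_degree2_eq) auto
    then show ?thesis by simp
  next
    assume "c = -1"
    then have "Brouwer_degree2 0 (G \<circ> \<phi> \<circ> E) = Brouwer_degree2 0 (\<lambda>x i. if i = 0 then -x i else x i)"
      using key by (intro Brouwer_degree2_eq) (auto simp: fun_eq_iff topspace_nsphere_iff)
    then show ?thesis by (simp add: Brouwer_degree2_reflection)
  qed
qed

end

lemma odd_approx:
  fixes \<phi> :: "'a::euclidean_space \<Rightarrow> 'a"
  assumes U: "subspace U" and W: "subspace W" and dimUW: "dim U < dim W" and UW: "U \<subseteq> W"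
    and contf: "continuous_on (sphere 0 1 \<inter> W) \<phi>"
    and fim: "\<phi> ` (sphere 0 1 \<inter> W) \<subseteq> sphere 0 1 \<inter> W"
    and fodd: "\<And>x. x \<in> sphere 0 1 \<inter> W \<Longrightarrow> \<phi> (-x) = - \<phi> x"
  obtains h d where "continuous_on (sphere 0 1 \<inter> W) h" "h ` (sphere 0 1 \<inter> W) \<subseteq> sphere 0 1 \<inter> W"
    "\<And>x. h (-x) = - h x"
    "homotopic_with_canon (\<lambda>x. True) (sphere 0 1 \<inter> W) (sphere 0 1 \<inter> W) \<phi> h"
    "d \<in> sphere 0 1 \<inter> W" "d \<notin> h ` (sphere 0 1 \<inter> U)"
proof -
  have "compact (sphere 0 1 \<inter> W)"
    by (simp add: W closed_subspace compact_Int_closed)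
  then obtain g where pfg: "polynomial_function g" and gim: "g ` (sphere 0 1 \<inter> W) \<subseteq> W"
                and g12: "\<And>x. x \<in> sphere 0 1 \<inter> W \<Longrightarrow> norm(\<phi> x - g x) < 1/2"
    using Stone_Weierstrass_polynomial_function_subspace [OF _ contf _ W, of "1/2"] fim
    by auto
  define g1 where "g1 \<equiv> \<lambda>x. (1/2) *\<^sub>R (g x - g (-x))"
  have pg1: "polynomial_function g1"
  proof -
    have "polynomial_function (g \<circ> (\<lambda>x. -x))"
      by (intro polynomial_function_compose pfg polynomial_function_minus polynomial_function_id)
    then show ?thesis
      unfolding g1_def using pfg by (auto simp: o_def)
  qed
  have g1odd: "g1 (-x) = - g1 x" for x
    by (simp add: g1_def algebra_simps)
  have symW: "x \<in> sphere 0 1 \<inter> W \<Longrightarrow> -x \<in> sphere 0 1 \<inter> W" for x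
    using W subspace_neg by auto
  have g1W: "g1 x \<in> W" if "x \<in> sphere 0 1 \<inter> W" for x
    unfolding g1_def using gim symW[OF that] that W
    by (auto intro!: subspace_scale subspace_diff)
  have g112: "norm (\<phi> x - g1 x) < 1/2" if x: "x \<in> sphere 0 1 \<inter> W" for x
  proof -
    have "\<phi> x - g1 x = (1/2) *\<^sub>R ((\<phi> x - g x) - (\<phi> (-x) - g (-x)))"
    proof -
      have hh: "(1/2::real) *\<^sub>R v + (1/2) *\<^sub>R v = v" for v :: 'a
        by (simp flip: scaleR_add_left)
      show ?thesis
        using fodd[OF x] by (simp add: g1_def algebra_simps hh)
    qed
    also have "norm \<dots> \<le> (1/2) * (norm (\<phi> x - g x) + norm (\<phi> (-x) - g (-x)))"
      by (simp add: norm_triangle_ineq4)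
    also have "\<dots> < (1/2) * (1/2 + 1/2)"
      using g12[OF x] g12[OF symW[OF x]] by simp
    finally show ?thesis by simp
  qed
  have fnorm: "norm (\<phi> x) = 1" if "x \<in> sphere 0 1 \<inter> W" for x
    using fim that by (auto simp: image_subset_iff)
  have gnz: "g1 x \<noteq> 0" if "x \<in> sphere 0 1 \<inter> W" for x
    using g112[OF that] fnorm[OF that] by auto
  have diffg: "g1 differentiable_on A" for A
    by (metis pg1 differentiable_on_polynomial_function)
  define h where "h \<equiv> \<lambda>x. inverse(norm(g1 x)) *\<^sub>R g1 x"
  have h: "x \<in> sphere 0 1 \<inter> W \<Longrightarrow> h x \<in> sphere 0 1 \<inter> W" for x
    unfolding h_def using W g1W gnz subspace_mul by fastforce
  have hodd: "h (-x) = - h x" for x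
    by (simp add: h_def g1odd)
  have sUW: "sphere 0 1 \<inter> U \<subseteq> sphere 0 1 \<inter> W" using UW by auto
  have diffh: "h differentiable_on sphere 0 1 \<inter> U"
    unfolding h_def using gnz sUW
    by (fastforce intro: derivative_intros diffg differentiable_on_compose [OF diffg])
  have contg1: "continuous_on (sphere 0 1 \<inter> W) g1"
    using differentiable_imp_continuous_on diffg by blast
  have homfg: "homotopic_with_canon (\<lambda>z. True) (sphere 0 1 \<inter> W) (W - {0}) \<phi> g1"
  proof (rule homotopic_with_linear [OF contf contg1])
    have non0fg: "0 \<notin> closed_segment (\<phi> x) (g1 x)" if "x \<in> sphere 0 1 \<inter> W" for x
    proof -
      have "\<phi> x \<in> sphere 0 1"
        using fim that by (auto simp: image_subset_iff)
      moreover have "norm(\<phi> x - g1 x) < 1/2"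
        using g112 that by auto
      ultimately show ?thesis
        by (auto simp: norm_minus_commute dest: segment_bound)
    qed
    show "closed_segment (\<phi> x) (g1 x) \<subseteq> W - {0}" if "x \<in> sphere 0 1 \<inter> W" for x
    proof -
      have "convex W"
        by (simp add: W subspace_imp_convex)
      then have "convex hull {\<phi> x, g1 x} \<subseteq> W"
        using fim g1W that by (intro hull_minimal) auto
      then show ?thesis
        using that non0fg segment_convex_hull by fastforce
    qed
  qed
  have conT0: "continuous_on (W - {0}) (\<lambda>y. inverse(norm y) *\<^sub>R y)"
    by (intro continuous_intros) auto
  have sub0T: "(\<lambda>y. inverse(norm y) *\<^sub>R y) \<in> (W - {0}) \<rightarrow> sphere 0 1 \<inter> W"
    by (fastforce simp: W subspace_mul)
  have hom: "homotopic_with_canon (\<lambda>x. True) (sphere 0 1 \<inter> W) (sphere 0 1 \<inter> W) \<phi> h"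
    using fnorm
    by (force simp: h_def 
           intro:  homotopic_with_eq homotopic_with_compose_continuous_left [OF homfg conT0 sub0T])
  obtain d where d: "d \<in> (sphere 0 1 \<inter> W) - h ` (sphere 0 1 \<inter> U)"
    using h sUW spheremap_lemma1 [OF U W dimUW UW diffh] by force
  have conth: "continuous_on (sphere 0 1 \<inter> W) h"
    unfolding h_def using gnz by (intro continuous_intros contg1) auto
  show thesis
    by (rule that[OF conth _ hodd hom, of d]) (use h d in auto)
qed

definition hh :: "'a::real_inner \<Rightarrow> 'a \<Rightarrow> 'a" where
  "hh u z = z - (2 * (z \<bullet> u) / (u \<bullet> u)) *\<^sub>R u"

lemma hh_norm: "norm (hh u z) = norm z"
proof -
  have "(hh u z) \<bullet> (hh u z) = z \<bullet> z"
  proof (cases "u \<bullet> u = 0")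
    case True then show ?thesis by (simp add: hh_def)
  next
    case False
    then show ?thesis
      by (simp add: hh_def inner_diff_left inner_diff_right algebra_simps power2_eq_square field_simps inner_commute)
  qed
  then show ?thesis by (simp add: norm_eq_sqrt_inner)
qed

lemma hh_e:
  assumes "norm d = 1" "norm e = 1"
  shows "hh (d - e) z \<bullet> e = z \<bullet> d"
proof (cases "d = e")
  case True then show ?thesis by (simp add: hh_def)
next
  case False
  have dd: "d \<bullet> d = 1" "e \<bullet> e = 1" using assms by (simp_all add: norm_eq_1)
  have uu: "(d - e) \<bullet> (d - e) = 2 - 2 * (d \<bullet> e)"
    using dd by (simp add: inner_diff_left inner_diff_right inner_commute)
  have nz: "(d - e) \<bullet> (d - e) \<noteq> 0" using False by simp
  have ue: "(d - e) \<bullet> e = d \<bullet> e - 1" using dd by (simp add: inner_diff_left)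
  have "hh (d - e) z \<bullet> e = z \<bullet> e - 2 * (z \<bullet> (d - e)) / ((d - e) \<bullet> (d - e)) * (d \<bullet> e - 1)"
    using dd by (simp add: hh_def inner_diff_left ue)
  also have "\<dots> = z \<bullet> e + z \<bullet> (d - e)"
    using nz unfolding uu by (simp add: field_simps)
  also have "\<dots> = z \<bullet> d" by (simp add: inner_diff_right)
  finally show ?thesis .
qed

lemma hh_linear: "hh u (a *\<^sub>R x + y) = a *\<^sub>R hh u x + hh u y"
  by (simp add: hh_def inner_add_left algebra_simps add_divide_distrib)

lemma hh_neg: "hh u (- x) = - hh u x"
  by (simp add: hh_def algebra_simps)

lemma hh_subspace: "subspace W \<Longrightarrow> u \<in> W \<Longrightarrow> z \<in> W \<Longrightarrow> hh u z \<in> W"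
  by (simp add: hh_def subspace_diff subspace_scale)

lemma hh_cont: "continuous_on A (hh u)"
proof -
  have eq: "hh u = (\<lambda>z. z - ((z \<bullet> u) * (2 / (u \<bullet> u))) *\<^sub>R u)"
    by (auto simp: hh_def fun_eq_iff)
  show ?thesis unfolding eq by (intro continuous_intros)
qed

definition cc :: "real \<Rightarrow> real \<Rightarrow> real" where
  "cc c0 a = (max 0 (a - c0) - max 0 (- a - c0)) / (1 - c0)"

lemma collapse:
  fixes d e :: "'a::euclidean_space"
  assumes W: "subspace W" and d: "d \<in> sphere 0 1 \<inter> W" and e: "e \<in> sphere 0 1 \<inter> W"
    and c0: "0 \<le> c0" "c0 < 1"
  obtains \<Psi> where "continuous_on (sphere 0 1 \<inter> W) \<Psi>" "\<Psi> ` (sphere 0 1 \<inter> W) \<subseteq> sphere 0 1 \<inter> W"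
    "\<And>y. \<Psi> (-y) = - \<Psi> y"
    "\<And>y. y \<in> sphere 0 1 \<inter> W \<Longrightarrow> \<bar>y \<bullet> d\<bar> \<le> c0 \<Longrightarrow> \<Psi> y \<bullet> e = 0"
proof -
  define w where "w \<equiv> \<lambda>y. cc c0 (y \<bullet> d) *\<^sub>R d + (y - (y \<bullet> d) *\<^sub>R d)"
  define \<Psi> where "\<Psi> \<equiv> \<lambda>y. hh (d - e) (inverse (norm (w y)) *\<^sub>R w y)"
  have dd: "d \<bullet> d = 1" using d by (simp add: norm_eq_1)
  have cc_odd: "cc c0 (-a) = - cc c0 a" for a
    by (simp add: cc_def minus_divide_left)
  have cc1: "cc c0 1 = 1" "cc c0 (-1) = -1" using c0 by (simp_all add: cc_def divide_simps)
  have cc0: "\<bar>a\<bar> \<le> c0 \<Longrightarrow> cc c0 a = 0" for a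
    by (simp add: cc_def)
  have wnz: "w y \<noteq> 0" if "y \<in> sphere 0 1" for y
  proof
    assume w0: "w y = 0"
    have "w y \<bullet> d = cc c0 (y \<bullet> d)"
      using dd by (simp add: w_def inner_add_left inner_diff_left)
    then have c: "cc c0 (y \<bullet> d) = 0" using w0 by simp
    then have "y = (y \<bullet> d) *\<^sub>R d" using w0 by (simp add: w_def)
    then have "norm y = \<bar>y \<bullet> d\<bar>" using d by (metis mult.right_neutral norm_scaleR IntD1 mem_sphere_0)
    then have "y \<bullet> d = 1 \<or> y \<bullet> d = -1" using that by auto
    then show False using c cc1 by auto
  qed
  have contw: "continuous_on A w" for A
    unfolding w_def cc_def by (intro continuous_intros) (use c0 in auto)
  show thesis
  proof
    show "continuous_on (sphere 0 1 \<inter> W) \<Psi>"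
    proof -
      have "continuous_on (sphere 0 1 \<inter> W) (\<lambda>y. inverse (norm (w y)) *\<^sub>R w y)"
        by (intro continuous_intros contw) (auto dest: wnz)
      then have "continuous_on (sphere 0 1 \<inter> W) (hh (d - e) \<circ> (\<lambda>y. inverse (norm (w y)) *\<^sub>R w y))"
        by (rule continuous_on_compose[OF _ hh_cont])
      then show ?thesis by (simp add: \<Psi>_def o_def)
    qed
    show "\<Psi> ` (sphere 0 1 \<inter> W) \<subseteq> sphere 0 1 \<inter> W"
    proof clarify
      fix y assume y: "y \<in> sphere 0 1" "y \<in> W"
      have "w y \<in> W" using W d y unfolding w_def
        by (auto intro!: subspace_add subspace_scale subspace_diff)
      then have "inverse (norm (w y)) *\<^sub>R w y \<in> W" using W by (simp add: subspace_scale)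
      moreover have "d - e \<in> W" using d e W by (auto intro: subspace_diff)
      ultimately show "\<Psi> y \<in> sphere 0 1 \<inter> W"
        using wnz[OF y(1)] W by (simp add: \<Psi>_def hh_norm hh_subspace)
    qed
    show "\<Psi> (- y) = - \<Psi> y" for y
    proof -
      have "w (-y) = - w y" by (simp add: w_def cc_odd algebra_simps)
      then show ?thesis by (simp add: \<Psi>_def hh_neg)
    qed
    show "\<Psi> y \<bullet> e = 0" if y: "y \<in> sphere 0 1 \<inter> W" and yd: "\<bar>y \<bullet> d\<bar> \<le> c0" for y
    proof -
      have "w y = y - (y \<bullet> d) *\<^sub>R d" using cc0[OF yd] by (simp add: w_def)
      then have "w y \<bullet> d = 0" using dd by (simp add: inner_diff_left)
      then show ?thesis
        using d e by (simp add: \<Psi>_def hh_e)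
    qed
  qed
qed

lemma unit_dist_inner:
  fixes d y :: "'a::real_inner"
  assumes "norm d = 1" "norm y = 1"
  shows "(norm (d - y))\<^sup>2 = 2 - 2 * (y \<bullet> d)" "(norm (- d - y))\<^sup>2 = 2 + 2 * (y \<bullet> d)"
  using assms by (simp_all add: power2_norm_eq_inner inner_diff_left inner_diff_right inner_commute norm_eq_1)

context benum
begin

lemma BU:
  "k < DIM('a) \<Longrightarrow> continuous_on (S k) \<phi> \<Longrightarrow> \<phi> ` S k \<subseteq> S k \<Longrightarrow> (\<And>x. x \<in> S k \<Longrightarrow> \<phi> (-x) = - \<phi> x)
   \<Longrightarrow> odd (Brouwer_degree2 k (G \<circ> \<phi> \<circ> E))"
proof (induction k arbitrary: \<phi>)
  case 0
  then show ?case using base by blast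
next
  case (Suc k)
  note N1 = Suc.prems(1)
  have N: "k < DIM('a)" using N1 by simp
  have dimlt: "dim (T k) < dim (T (Suc k))" using dim_T[OF N] dim_T[OF N1] by simp
  obtain h d where hc: "continuous_on (sphere 0 1 \<inter> T (Suc k)) h"
    and him: "h ` (sphere 0 1 \<inter> T (Suc k)) \<subseteq> sphere 0 1 \<inter> T (Suc k)"
    and hodd: "\<And>x. h (-x) = - h x"
    and hom: "homotopic_with_canon (\<lambda>x. True) (sphere 0 1 \<inter> T (Suc k)) (sphere 0 1 \<inter> T (Suc k)) \<phi> h"
    and d: "d \<in> sphere 0 1 \<inter> T (Suc k)" and dK: "d \<notin> h ` (sphere 0 1 \<inter> T k)"
    using odd_approx[OF subspace_T subspace_T dimlt T_mono[of k "Suc k"], of \<phi>] Suc.prems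
    by (auto simp: S_def)
  define K where "K = h ` S k"
  have Ksub: "K \<subseteq> S (Suc k)" using him S_sub[of k] unfolding K_def S_def by blast
  have "compact (S k)" by (simp add: S_def closed_subspace subspace_T compact_Int_closed)
  then have cK: "compact K" unfolding K_def
    using hc S_sub by (intro compact_continuous_image) (auto intro: continuous_on_subset simp: S_def)
  have Kne: "K \<noteq> {}" using b_in_S[OF N, of k] by (auto simp: K_def)
  have dK': "d \<notin> K" using dK by (simp add: K_def S_def)
  have mdK: "- d \<notin> K"
  proof
    assume "-d \<in> K"
    then obtain x where "x \<in> S k" "-d = h x" by (auto simp: K_def)
    then have "d = h (-x)" "-x \<in> S k" using hodd S_neg by (metis minus_minus)+
    then show False using dK' by (auto simp: K_def)
  qed
  define \<delta> where "\<delta> = min (infdist d K) (infdist (-d) K)"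
  have dpos: "\<delta> > 0" unfolding \<delta>_def
    using infdist_pos_not_in_closed[OF compact_imp_closed[OF cK] Kne] dK' mdK by auto
  define c0 where "c0 = max 0 (1 - \<delta>\<^sup>2 / 2)"
  have c0: "0 \<le> c0" "c0 < 1" using dpos by (auto simp: c0_def)
  have Kc0: "\<bar>y \<bullet> d\<bar> \<le> c0" if y: "y \<in> K" for y
  proof -
    have ny: "norm y = 1" and nd: "norm d = 1" using Ksub y d by (auto simp: S_def)
    have "\<delta> \<le> dist d y" "\<delta> \<le> dist (-d) y"
      unfolding \<delta>_def using infdist_le[OF y, of d] infdist_le[OF y, of "-d"] by auto
    then have "\<delta>\<^sup>2 \<le> (norm (d - y))\<^sup>2" "\<delta>\<^sup>2 \<le> (norm (- d - y))\<^sup>2"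
      using dpos by (auto simp: dist_norm intro!: power_mono)
    then show ?thesis using unit_dist_inner[OF nd ny] by (auto simp: c0_def abs_if)
  qed
  have e: "b (Suc k) \<in> sphere 0 1 \<inter> T (Suc k)" using b_in_S[OF N1, of "Suc k"] by (simp add: S_def)
  obtain \<Psi> where pc: "continuous_on (sphere 0 1 \<inter> T (Suc k)) \<Psi>"
    and pim: "\<Psi> ` (sphere 0 1 \<inter> T (Suc k)) \<subseteq> sphere 0 1 \<inter> T (Suc k)"
    and podd: "\<And>y. \<Psi> (-y) = - \<Psi> y"
    and peq: "\<And>y. y \<in> sphere 0 1 \<inter> T (Suc k) \<Longrightarrow> \<bar>y \<bullet> d\<bar> \<le> c0 \<Longrightarrow> \<Psi> y \<bullet> b (Suc k) = 0"
    using collapse[OF subspace_T d e c0] by blast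
  define g where "g = \<Psi> \<circ> h"
  have gc: "continuous_on (S (Suc k)) g"
    unfolding g_def S_def using hc him by (intro continuous_on_compose continuous_on_subset[OF pc]) auto
  have gim: "g ` S (Suc k) \<subseteq> S (Suc k)"
    using him pim by (auto simp: g_def S_def image_subset_iff)
  have godd: "\<And>x. g (-x) = - g x" by (simp add: g_def hodd podd)
  have gk: "g x \<in> S k" if x: "x \<in> S k" for x
  proof -
    have hx: "h x \<in> K" using x by (simp add: K_def)
    then have "h x \<in> sphere 0 1 \<inter> T (Suc k)" using Ksub by (auto simp: S_def)
    then have "\<Psi> (h x) \<in> S (Suc k)" "\<Psi> (h x) \<bullet> b (Suc k) = 0"
      using pim peq Kc0[OF hx] unfolding S_def by blast+
    then show ?thesis by (simp add: g_def S_Suc)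
  qed
  have IH: "odd (Brouwer_degree2 k (G \<circ> g \<circ> E))"
  proof (rule Suc.IH[OF N])
    show "continuous_on (S k) g" using gc S_sub[of k] by (rule continuous_on_subset)
    show "g ` S k \<subseteq> S k" using gk by auto
  qed (simp add: godd)
  have step: "even (Brouwer_degree2 (Suc k) (G \<circ> g \<circ> E) - Brouwer_degree2 (Suc k - Suc 0) (G \<circ> g \<circ> E))"
  proof (rule Borsuk_odd_mapping_degree_step)
    show "continuous_map (nsphere (Suc k)) (nsphere (Suc k)) (G \<circ> g \<circ> E)"
      by (rule cont_tr[OF N1 gc gim])
    show "((G \<circ> g \<circ> E) \<circ> (\<lambda>x i. - x i)) u = ((\<lambda>x i. - x i) \<circ> (G \<circ> g \<circ> E)) u"
      if "u \<in> topspace (nsphere (Suc k))" for u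
      by (rule odd_tr[OF N1 _ that]) (simp add: godd)
    show "G \<circ> g \<circ> E \<in> topspace (nsphere (Suc k - Suc 0)) \<rightarrow> topspace (nsphere (Suc k - Suc 0))"
      using E_in_S[OF _ N] gk G_in_nsphere[OF _ N] by auto
  qed
  have oddg: "odd (Brouwer_degree2 (Suc k) (G \<circ> g \<circ> E))"
    using step IH by simp
  have pc': "continuous_on (S (Suc k)) \<Psi>" and pim': "\<Psi> ` S (Suc k) \<subseteq> S (Suc k)"
    using pc pim by (simp_all add: S_def)
  have hc': "continuous_on (S (Suc k)) h" and him': "h ` S (Suc k) \<subseteq> S (Suc k)"
    using hc him by (simp_all add: S_def)
  have "Brouwer_degree2 (Suc k) (G \<circ> g \<circ> E)
        = Brouwer_degree2 (Suc k) (G \<circ> \<Psi> \<circ> E) * Brouwer_degree2 (Suc k) (G \<circ> h \<circ> E)"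
    unfolding g_def tr_comp[symmetric]
    by (rule Brouwer_degree2_compose[OF cont_tr[OF N1 hc' him'] cont_tr[OF N1 pc' pim']])
  then have oddh: "odd (Brouwer_degree2 (Suc k) (G \<circ> h \<circ> E))"
    using oddg by simp
  have "Brouwer_degree2 (Suc k) (G \<circ> \<phi> \<circ> E) = Brouwer_degree2 (Suc k) (G \<circ> h \<circ> E)"
    using hom homot_tr[OF N1] Brouwer_degree2_homotopic by (simp add: S_def)
  then show ?case using oddh by (simp add: comp_def)
qed

end

lemma neg_image: "uminus ` A = {x::'a::ab_group_add. -x \<in> A}"
  by (auto intro: image_eqI[where x="- x" for x])

lemma infdist_neg: "infdist (- v) A = infdist (v::'a::real_normed_vector) (uminus ` A)"
proof -
  have d: "(\<lambda>a. dist v (- a)) = (\<lambda>a. dist (- v) a)"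
    using dist_minus[of v "- a" for a] by auto
  have "(\<lambda>a. dist v a) ` (uminus ` A) = (\<lambda>a. dist v (- a)) ` A"
    by (rule image_image)
  then show ?thesis unfolding infdist_def d by auto
qed

lemma lin_hom:
  fixes f g :: "'a::real_normed_vector \<Rightarrow> 'b::real_normed_vector"
  assumes "continuous_on X f" "continuous_on X g"
    and nz: "\<And>x u. x \<in> X \<Longrightarrow> 0 \<le> u \<Longrightarrow> u \<le> 1 \<Longrightarrow> (1 - u) *\<^sub>R f x + u *\<^sub>R g x \<noteq> 0"
  shows "homotopic_with_canon (\<lambda>x. True) X (sphere 0 1) (\<lambda>x. inverse (norm (f x)) *\<^sub>R f x) (\<lambda>x. inverse (norm (g x)) *\<^sub>R g x)"
proof -
  have h: "homotopic_with_canon (\<lambda>z. True) X (UNIV - {0}) f g"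
  proof (rule homotopic_with_linear[OF assms(1,2)])
    fix x assume "x \<in> X"
    then show "closed_segment (f x) (g x) \<subseteq> UNIV - {0}"
      using nz by (auto simp: closed_segment_def)
  qed
  have c: "continuous_on (UNIV - {0}) (\<lambda>y::'b. inverse(norm y) *\<^sub>R y)"
    by (intro continuous_intros) auto
  have s: "(\<lambda>y::'b. inverse(norm y) *\<^sub>R y) \<in> (UNIV - {0}) \<rightarrow> sphere 0 1"
    by auto
  show ?thesis
    using homotopic_with_compose_continuous_left[OF h c s] by (simp add: o_def)
qed

lemma main_open:
  fixes f :: "nat \<Rightarrow> 'a::euclidean_space \<Rightarrow> real"
    and m :: nat
    and \<Omega>p \<Omega>m :: "'a set"
  assumes dim: "DIM('a) = m + 1"
    and cont: "\<And>i. i < m \<Longrightarrow> continuous_on (sphere 0 1) (f i)"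
    and odd: "\<And>i v. i < m \<Longrightarrow> v \<in> sphere 0 1 \<Longrightarrow> f i (- v) = - f i v"
    and open_p: "openin (top_of_set (sphere 0 1)) \<Omega>p"
    and open_m: "openin (top_of_set (sphere 0 1)) \<Omega>m"
    and disj: "\<Omega>p \<inter> \<Omega>m = {}"
    and union: "\<Omega>p \<union> \<Omega>m = {v \<in> sphere 0 1. \<forall>i<m. \<bar>f i v\<bar> < 1}"
    and neg: "\<Omega>m = uminus ` \<Omega>p"
    and t: "\<And>i. i < m \<Longrightarrow> \<bar>t i\<bar> < 1"
  shows "\<exists>v \<in> sphere 0 1. \<forall>i<m. f i v = t i"
proof (rule ccontr)
  assume nov: "\<not> (\<exists>v \<in> sphere 0 1. \<forall>i<m. f i v = t i)"
  obtain b :: "nat \<Rightarrow> 'a" where bb: "bij_betw b {0..<card (Basis::'a set)} Basis"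
    using ex_bij_betw_nat_finite[of "Basis::'a set"] by auto
  interpret benum b
    by unfold_locales (use bb in \<open>simp add: atLeast0LessThan\<close>)
  have mN: "m < DIM('a)" using dim by simp
  have Sm: "S m = sphere 0 1" using dim by (auto simp: S_def T_def)
  have mem_m: "x \<in> \<Omega>m \<longleftrightarrow> - x \<in> \<Omega>p" for x
    using neg by (auto simp: neg_image)
  have pS: "\<Omega>p \<subseteq> sphere 0 1" and mS: "\<Omega>m \<subseteq> sphere 0 1"
    using openin_imp_subset[OF open_p] openin_imp_subset[OF open_m] by auto
  have b0: "b 0 \<in> sphere 0 1" using b_Basis[of 0] dim by simp
  have mb0: "- b 0 \<in> sphere 0 1" using b0 by simp
  have cp: "closed (sphere 0 1 - \<Omega>p)" 
    using closedin_closed_trans[OF closedin_diff[OF closedin_topspace open_p]] by simp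
  have cm: "closed (sphere 0 1 - \<Omega>m)" 
    using closedin_closed_trans[OF closedin_diff[OF closedin_topspace open_m]] by simp
  have nep: "sphere 0 1 - \<Omega>p \<noteq> {}"
  proof
    assume "sphere 0 1 - \<Omega>p = {}"
    then have "b 0 \<in> \<Omega>p" "- b 0 \<in> \<Omega>p" using b0 mb0 by auto
    then show False using disj mem_m[of "b 0"] by auto
  qed
  have nem: "sphere 0 1 - \<Omega>m \<noteq> {}"
  proof
    assume "sphere 0 1 - \<Omega>m = {}"
    then have "b 0 \<in> \<Omega>m" "- b 0 \<in> \<Omega>m" using b0 mb0 by auto
    then show False using disj mem_m[of "b 0"] mem_m[of "- b 0"] by auto
  qed
  define s where "s \<equiv> \<lambda>v. infdist v (sphere 0 1 - \<Omega>p) - infdist v (sphere 0 1 - \<Omega>m)"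
  have s_p: "s v > 0" if "v \<in> \<Omega>p" for v
  proof -
    have "v \<in> sphere 0 1 - \<Omega>m" using that pS disj by auto
    then have "infdist v (sphere 0 1 - \<Omega>m) = 0" by (rule infdist_zero)
    moreover have "infdist v (sphere 0 1 - \<Omega>p) > 0"
      using infdist_pos_not_in_closed[OF cp nep] that by auto
    ultimately show ?thesis by (simp add: s_def)
  qed
  have s_m: "s v < 0" if "v \<in> \<Omega>m" for v
  proof -
    have "v \<in> sphere 0 1 - \<Omega>p" using that mS disj by auto
    then have "infdist v (sphere 0 1 - \<Omega>p) = 0" by (rule infdist_zero)
    moreover have "infdist v (sphere 0 1 - \<Omega>m) > 0"
      using infdist_pos_not_in_closed[OF cm nem] that by auto
    ultimately show ?thesis by (simp add: s_def)
  qed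
  have im1: "uminus ` (sphere 0 1 - \<Omega>p) = sphere 0 1 - \<Omega>m"
    using mem_m by (auto simp: neg_image)
  have im2: "uminus ` (sphere 0 1 - \<Omega>m) = sphere 0 1 - \<Omega>p"
    using mem_m by (auto simp: neg_image)
  have s_odd: "s (- v) = - s v" for v
    by (simp add: s_def infdist_neg im1 im2)
  have s_cont: "continuous_on A s" for A
    unfolding s_def by (intro continuous_intros)
  have s0: "\<exists>i<m. \<bar>f i v\<bar> \<ge> 1" if "v \<in> sphere 0 1" "s v = 0" for v
  proof (rule ccontr)
    assume "\<not> (\<exists>i<m. \<bar>f i v\<bar> \<ge> 1)"
    then have "v \<in> \<Omega>p \<union> \<Omega>m" using union that by auto
    then show False using s_p s_m that by force
  qed
  define \<Phi> where "\<Phi> \<equiv> \<lambda>(l::real) (mu::real) v. (\<Sum>i<m. (f i v - l * t i) *\<^sub>R b i) + (mu * s v) *\<^sub>R b m"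
  have \<Phi>_inner: "\<Phi> l mu v \<bullet> b j = (if j < m then f j v - l * t j else if j = m then mu * s v else 0)"
    if "j < DIM('a)" for l mu v j
  proof -
    have "\<Phi> l mu v \<bullet> b j = (\<Sum>i<m. (f i v - l * t i) * (b i \<bullet> b j)) + (mu * s v) * (b m \<bullet> b j)"
      by (simp add: \<Phi>_def inner_add_left inner_sum_left)
    also have "\<dots> = (\<Sum>i<m. if i = j then f i v - l * t i else 0) + (if j = m then mu * s v else 0)"
    proof (intro arg_cong2[where f="(+)"] sum.cong refl)
      show "(f i v - l * t i) * (b i \<bullet> b j) = (if i = j then f i v - l * t i else 0)" if "i \<in> {..<m}" for i
        using that \<open>j < DIM('a)\<close> mN by (simp add: b_inner)
      show "mu * s v * (b m \<bullet> b j) = (if j = m then mu * s v else 0)"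
        using \<open>j < DIM('a)\<close> mN by (simp add: b_inner)
    qed
    also have "\<dots> = (if j < m then f j v - l * t j else if j = m then mu * s v else 0)"
      by auto
    finally show ?thesis .
  qed
  have \<Phi>_cont: "continuous_on (sphere 0 1) (\<Phi> l mu)" for l mu
    unfolding \<Phi>_def
    by (intro continuous_intros continuous_on_sum s_cont) (auto intro: cont)
  have comb: "((1 - u) *\<^sub>R \<Phi> l1 mu1 v + u *\<^sub>R \<Phi> l2 mu2 v) \<bullet> b j
     = (1 - u) * (\<Phi> l1 mu1 v \<bullet> b j) + u * (\<Phi> l2 mu2 v \<bullet> b j)" for u l1 l2 mu1 mu2 v j
    by (simp add: inner_add_left)
  have hom1: "homotopic_with_canon (\<lambda>x. True) (sphere 0 1) (sphere 0 1)
      (\<lambda>v. inverse (norm (\<Phi> 0 1 v)) *\<^sub>R \<Phi> 0 1 v) (\<lambda>v. inverse (norm (\<Phi> 1 1 v)) *\<^sub>R \<Phi> 1 1 v)"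
  proof (rule lin_hom[OF \<Phi>_cont \<Phi>_cont])
    fix v :: 'a and u :: real assume v: "v \<in> sphere 0 1" and u: "0 \<le> u" "u \<le> 1"
    show "(1 - u) *\<^sub>R \<Phi> 0 1 v + u *\<^sub>R \<Phi> 1 1 v \<noteq> 0"
    proof
      assume z: "(1 - u) *\<^sub>R \<Phi> 0 1 v + u *\<^sub>R \<Phi> 1 1 v = 0"
      have ev: "f j v = u * t j" if "j < m" for j
        using arg_cong[OF z, of "\<lambda>w. w \<bullet> b j"] that mN
        by (simp add: comb \<Phi>_inner algebra_simps)
      have "s v = 0"
        using arg_cong[OF z, of "\<lambda>w. w \<bullet> b m"] mN by (simp add: comb \<Phi>_inner algebra_simps)
      then obtain i where i: "i < m" "\<bar>f i v\<bar> \<ge> 1" using s0 v by blast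
      have "\<bar>u * t i\<bar> < 1"
        using t[OF i(1)] u by (simp add: abs_mult) (smt (verit) mult_left_le_one_le abs_ge_zero)
      then show False using ev[OF i(1)] i(2) by simp
    qed
  qed
  have hom2: "homotopic_with_canon (\<lambda>x. True) (sphere 0 1) (sphere 0 1)
      (\<lambda>v. inverse (norm (\<Phi> 1 1 v)) *\<^sub>R \<Phi> 1 1 v) (\<lambda>v. inverse (norm (\<Phi> 1 0 v)) *\<^sub>R \<Phi> 1 0 v)"
  proof (rule lin_hom[OF \<Phi>_cont \<Phi>_cont])
    fix v :: 'a and u :: real assume v: "v \<in> sphere 0 1" and u: "0 \<le> u" "u \<le> 1"
    show "(1 - u) *\<^sub>R \<Phi> 1 1 v + u *\<^sub>R \<Phi> 1 0 v \<noteq> 0"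
    proof
      assume z: "(1 - u) *\<^sub>R \<Phi> 1 1 v + u *\<^sub>R \<Phi> 1 0 v = 0"
      have "f j v = t j" if "j < m" for j
        using arg_cong[OF z, of "\<lambda>w. w \<bullet> b j"] that mN
        by (simp add: comb \<Phi>_inner algebra_simps)
      then show False using nov v by blast
    qed
  qed
  define \<phi>0 where "\<phi>0 \<equiv> \<lambda>v. inverse (norm (\<Phi> 0 1 v)) *\<^sub>R \<Phi> 0 1 v"
  define \<psi>0 where "\<psi>0 \<equiv> \<lambda>v. inverse (norm (\<Phi> 1 0 v)) *\<^sub>R \<Phi> 1 0 v"
  have hom: "homotopic_with_canon (\<lambda>x. True) (S m) (S m) \<phi>0 \<psi>0"
    unfolding Sm \<phi>0_def \<psi>0_def by (rule homotopic_with_trans[OF hom1 hom2])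
  have \<Phi>0nz: "\<Phi> 0 1 v \<noteq> 0" if vS: "v \<in> sphere 0 1" for v
  proof
    assume z: "\<Phi> 0 1 v = 0"
    have "s v = 0" using arg_cong[OF z, of "\<lambda>w. w \<bullet> b m"] mN by (simp add: \<Phi>_inner)
    then obtain i where i: "i < m" "\<bar>f i v\<bar> \<ge> 1" using s0 vS by blast
    have "f i v = 0" using arg_cong[OF z, of "\<lambda>w. w \<bullet> b i"] mN i by (simp add: \<Phi>_inner)
    then show False using i by simp
  qed
  have \<phi>0c: "continuous_on (S m) \<phi>0"
    unfolding Sm \<phi>0_def using \<Phi>0nz by (intro continuous_intros \<Phi>_cont) auto
  have \<phi>0im: "\<phi>0 ` S m \<subseteq> S m"
    unfolding Sm \<phi>0_def using \<Phi>0nz by auto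
  have \<Phi>0odd: "\<Phi> 0 1 (- v) = - \<Phi> 0 1 v" if "v \<in> sphere 0 1" for v
    using that odd by (simp add: \<Phi>_def s_odd sum_negf[symmetric] scaleR_minus_left)
  have \<phi>0odd: "\<phi>0 (- x) = - \<phi>0 x" if "x \<in> S m" for x
    using \<Phi>0odd that by (simp add: \<phi>0_def Sm)
  have odd_deg: "odd (Brouwer_degree2 m (G \<circ> \<phi>0 \<circ> E))"
    by (rule BU[OF mN \<phi>0c \<phi>0im \<phi>0odd])
  have eqdeg: "Brouwer_degree2 m (G \<circ> \<phi>0 \<circ> E) = Brouwer_degree2 m (G \<circ> \<psi>0 \<circ> E)"
    by (rule Brouwer_degree2_homotopic[OF homot_tr[OF mN hom]])
  have \<psi>0c: "continuous_map (nsphere m) (nsphere m) (G \<circ> \<psi>0 \<circ> E)"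
    using homotopic_with_imp_continuous_maps[OF homot_tr[OF mN hom]] by blast
  have \<psi>0b: "\<psi>0 v \<bullet> b m = 0" for v
    using mN by (simp add: \<psi>0_def \<Phi>_inner)
  have "G (b m) \<in> topspace (nsphere m)"
    using G_in_nsphere[OF b_in_S[OF mN order_refl] mN] .
  moreover have "G (b m) \<notin> (G \<circ> \<psi>0 \<circ> E) ` topspace (nsphere m)"
  proof
    assume "G (b m) \<in> (G \<circ> \<psi>0 \<circ> E) ` topspace (nsphere m)"
    then obtain u where "G (b m) = G (\<psi>0 (E u))" by auto
    then have "b m = \<psi>0 (E u)" by (metis EG)
    then show False using \<psi>0b[of "E u"] b_inner[OF mN mN] by simp
  qed
  ultimately have "Brouwer_degree2 m (G \<circ> \<psi>0 \<circ> E) = 0"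
    using Brouwer_degree2_nonsurjective[OF \<psi>0c] by blast
  then show False using odd_deg eqdeg by simp
qed

theorem theorem1:
  fixes f :: "nat \<Rightarrow> 'a::euclidean_space \<Rightarrow> real"
    and m :: nat
    and \<Omega>p \<Omega>m :: "'a set"
  assumes dim: "DIM('a) = m + 1"
    and m_ge: "m \<ge> 1"
    and cont: "\<And>i. i < m \<Longrightarrow> continuous_on (sphere 0 1) (f i)"
    and odd: "\<And>i v. i < m \<Longrightarrow> v \<in> sphere 0 1 \<Longrightarrow> f i (- v) = - f i v"
    and open_p: "openin (top_of_set (sphere 0 1)) \<Omega>p"
    and open_m: "openin (top_of_set (sphere 0 1)) \<Omega>m"
    and disj: "\<Omega>p \<inter> \<Omega>m = {}"
    and union: "\<Omega>p \<union> \<Omega>m = {v \<in> sphere 0 1. \<forall>i<m. \<bar>f i v\<bar> < 1}"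
    and neg: "\<Omega>m = uminus ` \<Omega>p"
  shows "\<forall>t :: nat \<Rightarrow> real. (\<forall>i<m. -1 \<le> t i \<and> t i \<le> 1) \<longrightarrow>
           (\<exists>v \<in> sphere 0 1. \<forall>i<m. f i v = t i)"
proof (intro allI impI)
  fix t :: "nat \<Rightarrow> real" assume t: "\<forall>i<m. -1 \<le> t i \<and> t i \<le> 1"
  show "\<exists>v \<in> sphere 0 1. \<forall>i<m. f i v = t i"
  proof (rule ccontr)
    assume no: "\<not> (\<exists>v \<in> sphere 0 1. \<forall>i<m. f i v = t i)"
    define D where "D \<equiv> \<lambda>v. (\<Sum>i<m. \<bar>f i v - t i\<bar>)"
    have Dc: "continuous_on (sphere 0 1) D"
      unfolding D_def by (intro continuous_intros continuous_on_sum) (auto intro: cont)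
    have ne: "sphere (0::'a) 1 \<noteq> {}" by simp
    obtain v0 where v0: "v0 \<in> sphere 0 1" and v0min: "\<And>y. y \<in> sphere 0 1 \<Longrightarrow> D v0 \<le> D y"
      using continuous_attains_inf[OF compact_sphere ne Dc] by blast
    define \<delta> where "\<delta> = D v0"
    have dpos: "\<delta> > 0"
    proof -
      have "\<delta> \<ge> 0" by (simp add: \<delta>_def D_def sum_nonneg)
      moreover have "\<delta> \<noteq> 0"
      proof
        assume "\<delta> = 0"
        then have "\<forall>i<m. f i v0 = t i"
          by (simp add: \<delta>_def D_def sum_nonneg_eq_0_iff)
        then show False using no v0 by blast
      qed
      ultimately show ?thesis by simp
    qed
    define \<eta> where "\<eta> = min 1 (\<delta> / (2 * (real m + 1)))"
    have eta: "0 < \<eta>" "\<eta> \<le> 1" "\<eta> \<le> \<delta> / (2 * (real m + 1))"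
      using dpos by (auto simp: \<eta>_def)
    define t' where "t' = (\<lambda>i. (1 - \<eta>) * t i)"
    have t': "\<bar>t' i\<bar> < 1" if "i < m" for i
    proof -
      have "\<bar>t' i\<bar> = (1 - \<eta>) * \<bar>t i\<bar>" using eta by (simp add: t'_def abs_mult)
      also have "\<dots> \<le> (1 - \<eta>) * 1" using t that eta by (intro mult_left_mono) auto
      also have "\<dots> < 1" using eta by simp
      finally show ?thesis .
    qed
    have "\<exists>v \<in> sphere 0 1. \<forall>i<m. f i v = t' i"
      by (rule main_open[where t=t' and f=f and \<Omega>p=\<Omega>p and \<Omega>m=\<Omega>m]) (use assms t' in auto)
    then obtain v where v: "v \<in> sphere 0 1" and fv: "\<forall>i<m. f i v = t' i"
      by blast
    have "D v = (\<Sum>i<m. \<eta> * \<bar>t i\<bar>)"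
      unfolding D_def
    proof (intro sum.cong refl)
      fix i assume "i \<in> {..<m}"
      then have "f i v - t i = - (\<eta> * t i)" using fv by (simp add: t'_def algebra_simps)
      then show "\<bar>f i v - t i\<bar> = \<eta> * \<bar>t i\<bar>" using eta by (simp add: abs_mult)
    qed
    also have "\<dots> \<le> (\<Sum>i<m. \<eta>)"
      using t eta by (intro sum_mono) (auto intro: mult_left_le)
    also have "\<dots> = real m * \<eta>" by simp
    also have "\<dots> \<le> real m * (\<delta> / (2 * (real m + 1)))"
      using eta by (intro mult_left_mono) auto
    also have "\<dots> < \<delta>"
    proof -
      have p: "0 < 2 * (real m + 1)" by simp
      have a: "0 \<le> \<delta> * real m" using dpos by (simp add: zero_le_mult_iff)
      have e: "\<delta> * (2 * (real m + 1)) = 2 * (\<delta> * real m) + 2 * \<delta>" by (simp add: algebra_simps)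
      have "real m * \<delta> < \<delta> * (2 * (real m + 1))"
        unfolding e using a dpos mult.commute[of "real m" \<delta>] by linarith
      then have "real m * \<delta> / (2 * (real m + 1)) < \<delta>"
        by (simp only: pos_divide_less_eq[OF p])
      then show ?thesis by (simp add: times_divide_eq_right)
    qed
    finally have "D v < D v0" by (simp add: \<delta>_def)
    then show False using v0min[OF v] by simp
  qed
qed

end
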